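(* Let $q$ be a prime power, $1\le t\le s$, and $M$ an invertible $s\times s$ matrix over $\mathbb{F}_q$. If $\mathbf{y}=\mathbf{x}M^{-1}$ defines a linear $(t,t,s,q)$-AONT, then $\mathbf{y}=\mathbf{x}M$ defines a linear $(s-t,s-t,s,q)$-AONT.
   Context: For a bijection $\phi:\Gamma^s\to\Gamma^s$ over an alphabet $\Gamma$ of size $v$, its array representation is the $v^s\times 2s$ array having, for each $\mathbf{x}\in\Gamma^s$, a row $(\mathbf{x},\phi(\mathbf{x}))$. An $N\times k$ array is unbiased with respect to a set $D$ of columns if the rows restricted to $D$ contain every $|D|$-tuple over $\Gamma$ exactly $N/v^{|D|}$ times. For integers $0\le t_i\le t_o\le s$, $\phi$ is a $(t_i,t_o,s,v)$-AONT if its array representation (columns labelled $1,\dots,2s$) is unbiased with respect to $\{1,\dots,s\}$, $\{s+1,\dots,2s\}$, and $I\cup J$ for every $I\subseteq\{1,\dots,s\}$ with $|I|=t_i$ and every $J\subseteq\{s+1,\dots,2s\}$ with $|J|=s-t_o$. A map $\mathbf{x}\mapsto \mathbf{x}N$ on row vectors in $\mathbb{F}_q^s$ with $N$ invertible is a linear $(t_i,t_o,s,q)$-AONT if it is a $(t_i,t_o,s,q)$-AONT over $\Gamma=\mathbb{F}_q$. *)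

theory Defs
  imports "HOL-Analysis.Analysis"
begin

text \<open>Array representation of a bijection phi on Gamma^s, with s = CARD('n) and
  Gamma = the finite type 'a. Columns 1..s are Inl i (input coordinates),
  columns s+1..2s are Inr j (output coordinates).\<close>

definition arr_entry :: "('a ^ 'n \<Rightarrow> 'a ^ 'n) \<Rightarrow> 'a ^ 'n \<Rightarrow> ('n + 'n) \<Rightarrow> 'a" where
  "arr_entry phi x c = (case c of Inl i \<Rightarrow> x $ i | Inr j \<Rightarrow> phi x $ j)"

text \<open>Unbiased w.r.t. column set D: every |D|-tuple (a function on D) occurs
  exactly N / v^|D| times, N = v^s the number of rows; stated without division.\<close>

definition unbiased :: "('a::finite ^ 'n::finite \<Rightarrow> 'a ^ 'n) \<Rightarrow> ('n + 'n) set \<Rightarrow> bool" where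
  "unbiased phi D \<longleftrightarrow>
     (\<forall>f :: 'n + 'n \<Rightarrow> 'a.
        card {x. \<forall>c\<in>D. arr_entry phi x c = f c} * CARD('a) ^ card D = CARD('a) ^ CARD('n))"

definition AONT :: "nat \<Rightarrow> nat \<Rightarrow> ('a::finite ^ 'n::finite \<Rightarrow> 'a ^ 'n) \<Rightarrow> bool" where
  "AONT ti to phi \<longleftrightarrow>
     ti \<le> to \<and> to \<le> CARD('n) \<and> bij phi \<and>
     unbiased phi (range Inl) \<and> unbiased phi (range Inr) \<and>
     (\<forall>I J. card I = ti \<and> card J = CARD('n) - to \<longrightarrow> unbiased phi (Inl ` I \<union> Inr ` J))"

definition linear_AONT :: "nat \<Rightarrow> nat \<Rightarrow> 'a::{finite,field} ^ 'n::finite ^ 'n \<Rightarrow> bool" where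
  "linear_AONT ti to N \<longleftrightarrow> invertible N \<and> AONT ti to (\<lambda>x. x v* N)"

end

theory Submission
  imports Defs
begin

definition sw :: "('n + 'n) \<Rightarrow> ('n + 'n)" where
  "sw c = (case c of Inl i \<Rightarrow> Inr i | Inr j \<Rightarrow> Inl j)"

lemma sw_Inl[simp]: "sw (Inl i) = Inr i" by (simp add: sw_def)
lemma sw_Inr[simp]: "sw (Inr i) = Inl i" by (simp add: sw_def)
lemma sw_img_Inl: "sw ` range Inl = range Inr"
  unfolding image_image by simp
lemma sw_img_Inr: "sw ` range Inr = range Inl"
  unfolding image_image by simp

lemma sw_sw[simp]: "sw (sw c) = c"
  by (cases c) (auto simp: sw_def)

lemma inj_sw: "inj sw"
  by (metis injI sw_sw)

lemma unbiased_swap: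
  fixes phi psi :: "'a::finite ^ 'n::finite \<Rightarrow> 'a ^ 'n"
  assumes inv1: "\<And>x. psi (phi x) = x" and inv2: "\<And>y. phi (psi y) = y"
    and U: "unbiased psi (sw ` D)"
  shows "unbiased phi D"
  unfolding unbiased_def
proof
  fix f :: "'n + 'n \<Rightarrow> 'a"
  have ent: "arr_entry psi (phi x) (sw c) = arr_entry phi x c" for x c
    by (cases c) (auto simp: sw_def arr_entry_def inv1)
  let ?A = "{x. \<forall>c\<in>D. arr_entry phi x c = f c}"
  let ?B = "{y. \<forall>c'\<in>sw ` D. arr_entry psi y c' = (f \<circ> sw) c'}"
  have "bij_betw phi ?A ?B"
  proof (rule bij_betw_byWitness[where f'=psi])
    show "\<forall>a\<in>?A. psi (phi a) = a" by (simp add: inv1)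
    show "\<forall>a'\<in>?B. phi (psi a') = a'" by (simp add: inv2)
    show "phi ` ?A \<subseteq> ?B" by (auto simp: ent)
    show "psi ` ?B \<subseteq> ?A"
    proof
      fix x assume "x \<in> psi ` ?B"
      then obtain y where y: "y \<in> ?B" "x = psi y" by auto
      then have "phi x = y" by (simp add: inv2)
      then show "x \<in> ?A" using y(1) ent[of x] by auto
    qed
  qed
  then have "card ?A = card ?B" by (rule bij_betw_same_card)
  moreover have "card (sw ` D) = card D" by (rule card_image[OF inj_on_subset[OF inj_sw subset_UNIV]])
  moreover have "card ?B * CARD('a) ^ card (sw ` D) = CARD('a) ^ CARD('n)"
    using U[unfolded unbiased_def, rule_format, of "f \<circ> sw"] .
  ultimately show "card ?A * CARD('a) ^ card D = CARD('a) ^ CARD('n)"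
    by simp
qed

theorem mainTheorem5:
  fixes M :: "'a::{finite,field} ^ 'n::finite ^ 'n" and t :: nat
  assumes "1 \<le> t" and "t \<le> CARD('n)"
    and "invertible M"
    and "linear_AONT t t (matrix_inv M)"
  shows "linear_AONT (CARD('n) - t) (CARD('n) - t) M"
proof -
  have MM: "M ** matrix_inv M = mat 1 \<and> matrix_inv M ** M = mat 1"
    using assms(3) unfolding invertible_def matrix_inv_def by (rule someI_ex)
  define phi where "phi = (\<lambda>x::'a^'n. x v* M)"
  define psi where "psi = (\<lambda>x::'a^'n. x v* matrix_inv M)"
  have i1: "psi (phi x) = x" for x
    unfolding phi_def psi_def vector_matrix_mul_assoc using MM by simp
  have i2: "phi (psi x) = x" for x
    unfolding phi_def psi_def vector_matrix_mul_assoc using MM by simp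
  have A: "AONT t t psi" using assms(4) unfolding linear_AONT_def psi_def by blast
  have bij: "bij phi"
    by (rule bij_betw_byWitness[where f'=psi]) (auto simp: i1 i2)
  have sw_U: "unbiased psi (sw ` D) \<Longrightarrow> unbiased phi D" for D
    by (rule unbiased_swap[of psi phi, OF i1 i2])
  have u1: "unbiased phi (range Inl)"
    by (rule sw_U) (unfold sw_img_Inl sw_img_Inr, use A in \<open>simp add: AONT_def\<close>)
  have u2: "unbiased phi (range Inr)"
    by (rule sw_U) (unfold sw_img_Inl sw_img_Inr, use A in \<open>simp add: AONT_def\<close>)
  have u3: "unbiased phi (Inl ` I \<union> Inr ` J)"
    if "card I = CARD('n) - t" "card J = CARD('n) - (CARD('n) - t)" for I J :: "'n set"
  proof -
    have "card J = t" using that(2) assms(2) by simp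
    then have "unbiased psi (Inl ` J \<union> Inr ` I)" using A that(1) unfolding AONT_def by blast
    moreover have "sw ` (Inl ` I \<union> Inr ` J) = Inl ` J \<union> Inr ` I"
      unfolding image_Un image_image sw_Inl sw_Inr by (rule Un_commute)
    ultimately show ?thesis by (intro sw_U) simp
  qed
  show ?thesis
    unfolding linear_AONT_def AONT_def phi_def[symmetric]
  proof (intro conjI allI impI)
    show "invertible M" by (rule assms(3))
    show "bij phi" by (rule bij)
    show "unbiased phi (range Inl)" by (rule u1)
    show "unbiased phi (range Inr)" by (rule u2)
    show "CARD('n) - t \<le> CARD('n) - t" by simp
    show "CARD('n) - t \<le> CARD('n)" by simp
    fix I J :: "'n set"
    assume "card I = CARD('n) - t \<and> card J = CARD('n) - (CARD('n) - t)"
    then show "unbiased phi (Inl ` I \<union> Inr ` J)" using u3 by blast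
  qed
qed

end
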